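(* Let $m>n>0$ be integers, and let $a,b,x$ be real numbers with $|x|<m^m/(n^n(m-n)^{m-n})$. Set $$S_{m,n}(a,b,x)=\sum_{k=1}^\infty(ak+b)\frac{x^k}{\binom{mk}{nk}}.$$ Then $$S_{m,n}(a,b,x)=n\int_0^1T_{m,n}(a,b,x;t)\,dt,$$ where $$T_{m,n}(a,b,x;t)=t^{n-1}(1-t)^{m-n}x\,\frac{(a-b)t^n(1-t)^{m-n}x+a+b}{(1-t^n(1-t)^{m-n}x)^3}.$$ *)

theory Defs
  imports "HOL-Analysis.Analysis"
begin

definition T_mn :: "nat \<Rightarrow> nat \<Rightarrow> real \<Rightarrow> real \<Rightarrow> real \<Rightarrow> real \<Rightarrow> real" where
  "T_mn m n a b x t =
     t ^ (n - 1) * (1 - t) ^ (m - n) * x *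
     (((a - b) * t ^ n * (1 - t) ^ (m - n) * x + a + b) /
      (1 - t ^ n * (1 - t) ^ (m - n) * x) ^ 3)"

end

theory Submission
  imports Defs
begin

lemma aux: "(w::real) \<noteq> 0 \<Longrightarrow> - (inverse (w^2) * (of_nat 2 * w^(2-1) * (0 - 1)) * inverse (w^2)) = 2 / w^3"
  by (simp add: field_simps power2_eq_square power3_eq_cube)

lemma aux2: "(w::real) \<noteq> 0 \<Longrightarrow> a*(2/w^3) + (b-a)*(1/w^2) = ((a-b)*(1-w)+a+b)/w^3"
  by (simp add: field_simps power2_eq_square power3_eq_cube)

lemma sums2:
  fixes z :: real
  assumes "norm z < 1"
  shows "(\<lambda>k. real (Suc k * Suc (Suc k)) * z ^ k) sums (2 / (1 - z)^3)"
proof -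
  have "(\<lambda>n. diffs (\<lambda>k. real (Suc k)) n * z^n) sums (2 / (1 - z)^3)"
  proof (rule termdiffs_sums_strong[where K=1])
    fix z :: real assume "norm z < 1"
    thus "(\<lambda>n. real (Suc n) * z^n) sums (1 / (1 - z)^2)" by (rule geometric_deriv_sums)
  next
    have "1 - z \<noteq> 0" using assms by auto
    have "((\<lambda>z. inverse ((1 - z)^2)) has_field_derivative - (inverse ((1 - z)^2) * (of_nat 2 * (1-z)^(2-1) * (0 - 1)) * inverse ((1 - z)^2))) (at z)"
      using \<open>1 - z \<noteq> 0\<close> by (intro derivative_eq_intros refl) auto
    moreover have "- (inverse ((1 - z)^2) * (of_nat 2 * (1-z)^(2-1) * (0 - 1)) * inverse ((1 - z)^2)) = 2 / (1 - z)^3"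
      using \<open>1 - z \<noteq> 0\<close> aux by blast
    ultimately show "((\<lambda>z. 1 / (1 - z)^2) has_field_derivative 2 / (1 - z)^3) (at z)"
      by (simp add: inverse_eq_divide)
  qed (use assms in auto)
  thus ?thesis unfolding diffs_def by (simp add: algebra_simps)
qed

lemma beta_nat:
  assumes "p > 0"
  shows "((\<lambda>t::real. t^(p-1)*(1-t)^q) has_integral (fact (p-1) * fact q / fact (p+q))) {0..1}"
proof -
  have B: "((\<lambda>t. t powr (real p - 1) * (1 - t) powr (real q + 1 - 1)) has_integral Beta (real p) (real q + 1)) {0..1}"
    using assms by (intro has_integral_Beta_real) auto
  have "Beta (real p) (real q + 1) = fact (p-1) * fact q / fact (p+q)"
  proof -
    have 1: "Gamma (real p) = fact (p-1)" using assms Gamma_fact[of "p-1", where 'a=real]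
      by (simp add: of_nat_diff)
    have 2: "Gamma (real q + 1) = fact q" using Gamma_fact[of q, where 'a=real] by (simp add: add.commute)
    have 3: "Gamma (real p + (real q + 1)) = fact (p+q)" using Gamma_fact[of "p+q", where 'a=real] assms
      by (simp add: add_ac)
    show ?thesis unfolding Beta_def 1 2 3 ..
  qed
  with B have B': "((\<lambda>t. t powr (real p - 1) * (1 - t) powr (real q + 1 - 1)) has_integral (fact (p-1) * fact q / fact (p+q))) {0..1}" by simp
  show ?thesis
  proof (rule has_integral_spike_finite[of "{0,1}", OF _ _ B'])
    show "finite {0::real,1}" by simp
    fix t :: real assume "t \<in> {0..1} - {0,1}"
    then have t: "0 < t" "t < 1" by auto
    have "t powr (real p - 1) = t ^ (p-1)" using t assms by (simp add: powr_realpow[symmetric] of_nat_diff)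
    moreover have "(1 - t) powr (real q + 1 - 1) = (1-t)^q" using t by (simp add: powr_realpow)
    ultimately show "t^(p-1)*(1-t)^q = t powr (real p - 1) * (1 - t) powr (real q + 1 - 1)" by simp
  qed
qed

lemma max_bound:
  fixes t :: real and m n :: nat
  assumes "0 < n" "n < m" "0 \<le> t" "t \<le> 1"
  shows "t^n * (1-t)^(m-n) * real m ^ m \<le> real n ^ n * real (m-n) ^ (m-n)"
proof -
  have key: "y ^ k \<le> exp (real k * (y - 1))" if "y \<ge> 0" for y :: real and k
  proof -
    have "y \<le> exp (y - 1)" using exp_ge_add_one_self[of "y-1"] by simp
    then have "y ^ k \<le> exp (y-1) ^ k" using that by (intro power_mono) auto
    also have "\<dots> = exp (real k * (y - 1))" by (simp add: exp_of_nat_mult)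
    finally show ?thesis .
  qed
  have mn: "real (m - n) > 0" using assms by simp
  have "(t * m / n) ^ n * ((1-t) * m / (m-n)) ^ (m-n) \<le> exp (real n * (t*m/n - 1)) * exp (real (m-n) * ((1-t)*m/(m-n) - 1))"
    using assms by (intro mult_mono key) auto
  also have "\<dots> = exp (real n * (t*m/n - 1) + real (m-n) * ((1-t)*m/(m-n) - 1))" by (simp add: exp_add)
  also have "real n * (t*m/n - 1) + real (m-n) * ((1-t)*m/(m-n) - 1) = 0"
    using assms mn by (simp add: field_simps of_nat_diff)
  finally have *: "(t * m / n) ^ n * ((1-t) * m / (m-n)) ^ (m-n) \<le> 1" by simp
  have "real m ^ m = real m ^ n * real m ^ (m-n)" using assms by (simp add: power_add[symmetric])
  then have "t^n * (1-t)^(m-n) * real m ^ m = (t * m / n) ^ n * ((1-t) * m / (m-n)) ^ (m-n) * (real n ^ n * real (m-n) ^ (m-n))"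
    using assms mn by (simp add: power_mult_distrib power_divide)
  also have "\<dots> \<le> 1 * (real n ^ n * real (m-n) ^ (m-n))"
    using * by (intro mult_right_mono) auto
  finally show ?thesis by simp
qed

theorem proposition2p1:
  fixes m n :: nat and a b x :: real
  assumes "0 < n" and "n < m"
    and "\<bar>x\<bar> < real m ^ m / (real n ^ n * real (m - n) ^ (m - n))"
  shows "(\<lambda>k. (a * real (Suc k) + b) * x ^ Suc k / real (m * Suc k choose (n * Suc k)))
           sums (real n * integral {0..1} (T_mn m n a b x))"
proof -
  define c where "c = (\<lambda>k. (a * real (Suc k) + b) * x ^ Suc k / real (m * Suc k choose (n * Suc k)))"
  define u where "u = (\<lambda>t::real. t^n*(1-t)^(m-n)*x)"
  define v where "v = (\<lambda>t::real. t^(n-1)*(1-t)^(m-n)*x)"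
  define f where "f = (\<lambda>k t. real n * v t * (real (Suc k) * (a*real(Suc k)+b)) * u t ^ k)"
  define D where "D = real n ^ n * real (m - n) ^ (m - n)"
  define r where "r = \<bar>x\<bar> * D / real m ^ m"
  have Dpos: "D > 0" unfolding D_def using assms by simp
  have mpos: "real m ^ m > 0" using assms by simp
  have r0: "r \<ge> 0" unfolding r_def using Dpos mpos by simp
  have r1: "r < 1" unfolding r_def using assms(3) Dpos mpos unfolding D_def[symmetric]
    by (simp add: field_simps)
  have ubound: "\<bar>u t\<bar> \<le> r" if t: "t \<in> {0..1}" for t
  proof -
    have "t^n * (1-t)^(m-n) * real m ^ m \<le> D" unfolding D_def using max_bound[of n m t] assms t by auto
    then have "t^n * (1-t)^(m-n) \<le> D / real m ^ m" using mpos by (simp add: field_simps)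
    moreover have "\<bar>u t\<bar> = t^n * (1-t)^(m-n) * \<bar>x\<bar>" using t unfolding u_def by (simp add: abs_mult)
    ultimately show ?thesis unfolding r_def using mpos
      by (metis mult.commute mult_left_mono abs_ge_zero times_divide_eq_right)
  qed
  have vbound: "\<bar>v t\<bar> \<le> \<bar>x\<bar>" if t: "t \<in> {0..1}" for t
  proof -
    have "t^(n-1) \<le> 1" "(1-t)^(m-n) \<le> 1" using t by (auto intro: power_le_one)
    moreover have "t^(n-1) \<ge> 0" "(1-t)^(m-n) \<ge> 0" using t by auto
    ultimately have "t^(n-1)*(1-t)^(m-n) \<le> 1" by (simp add: mult_le_one)
    then show ?thesis unfolding v_def using t \<open>t^(n-1) \<ge> 0\<close> \<open>(1-t)^(m-n) \<ge> 0\<close>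
      by (simp add: abs_mult mult_left_le_one_le mult_le_cancel_right1)
  qed
  have fint: "(f k has_integral c k) {0..1}" for k
  proof -
    define p where "p = n * Suc k"
    define q where "q = (m-n) * Suc k"
    define K where "K = (a*real(Suc k)+b) * x^Suc k * real p"
    have pq: "p + q = m * Suc k"
    proof -
      have "p + q = (n + (m - n)) * Suc k" unfolding p_def q_def by (simp only: add_mult_distrib)
      then show ?thesis using assms by simp
    qed
    have ppos: "p > 0" unfolding p_def using assms by simp
    have feq: "f k t = K * (t^(p-1)*(1-t)^q)" for t
    proof -
      have e1: "p - 1 = (n-1) + n*k" unfolding p_def using assms by (cases n) auto
      have "t^(p-1) = t^(n-1) * (t^n)^k" unfolding e1 by (simp add: power_add power_mult)
      moreover have "(1-t)^q = (1-t)^(m-n) * ((1-t)^(m-n))^k" unfolding q_def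
        by (simp only: mult_Suc_right power_add power_mult)
      ultimately show ?thesis unfolding f_def K_def u_def v_def p_def
        by (simp add: power_mult_distrib algebra_simps)
    qed
    have "(f k has_integral K * (fact (p-1) * fact q / fact (p+q))) {0..1}"
      unfolding feq by (intro has_integral_mult_right beta_nat ppos)
    moreover have "K * (fact (p-1) * fact q / fact (p+q)) = c k"
    proof -
      have "real p * fact (p-1) = fact p" using fact_reduce[OF ppos, where 'a=real] by simp
      moreover have "real (m * Suc k choose p) = fact (p+q) / (fact p * fact q)"
      proof -
        have "m * Suc k - p = q" "p \<le> m * Suc k" using pq by linarith+
        then show ?thesis using binomial_fact[of p "m * Suc k", where 'a=real] pq by simp
      qed
      ultimately have "real p * (fact (p-1) * fact q / fact (p+q)) = 1 / real (m * Suc k choose p)"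
      proof -
        assume h1: "real p * fact (p-1) = fact p" and h2: "real (m * Suc k choose p) = fact (p+q) / (fact p * fact q)"
        have "real p * (fact (p-1) * fact q / fact (p+q)) = fact p * fact q / fact (p+q)"
          using h1 by (simp add: mult.assoc[symmetric])
        also have "\<dots> = 1 / real (m * Suc k choose p)" using h2 by simp
        finally show ?thesis .
      qed
      then have "K * (fact (p-1) * fact q / fact (p+q)) = (a*real(Suc k)+b) * x^Suc k * (1 / real (m * Suc k choose p))"
        unfolding K_def by (simp only: mult.assoc)
      then show ?thesis unfolding c_def p_def by simp
    qed
    ultimately show ?thesis by simp
  qed
  have fsum: "(\<lambda>k. f k t) sums (real n * T_mn m n a b x t)" if t: "t \<in> {0..1}" for t
  proof -
    have u1: "norm (u t) < 1" using ubound[OF t] r1 by simp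
    have s1: "(\<lambda>k. real (Suc k * Suc (Suc k)) * u t ^ k) sums (2 / (1 - u t)^3)" by (rule sums2[OF u1])
    have s2: "(\<lambda>k. real (Suc k) * u t ^ k) sums (1 / (1 - u t)^2)" by (rule geometric_deriv_sums[OF u1])
    have "(\<lambda>k. a * (real (Suc k * Suc (Suc k)) * u t ^ k) + (b - a) * (real (Suc k) * u t ^ k))
          sums (a * (2 / (1 - u t)^3) + (b - a) * (1 / (1 - u t)^2))"
      by (intro sums_add sums_mult s1 s2)
    then have S: "(\<lambda>k. real n * v t * (a * (real (Suc k * Suc (Suc k)) * u t ^ k) + (b - a) * (real (Suc k) * u t ^ k)))
          sums (real n * v t * (a * (2 / (1 - u t)^3) + (b - a) * (1 / (1 - u t)^2)))"
      by (intro sums_mult)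
    moreover have E1: "(\<lambda>k. real n * v t * (a * (real (Suc k * Suc (Suc k)) * u t ^ k) + (b - a) * (real (Suc k) * u t ^ k))) = (\<lambda>k. f k t)"
      apply (rule ext)
      unfolding f_def by (simp add: algebra_simps)
    moreover have E2: "real n * v t * (a * (2 / (1 - u t)^3) + (b - a) * (1 / (1 - u t)^2)) = real n * T_mn m n a b x t"
    proof -
      have ne: "1 - u t \<noteq> 0" using u1 by auto
      have "a * (2 / (1 - u t)^3) + (b - a) * (1 / (1 - u t)^2) = ((a - b) * u t + a + b) / (1 - u t)^3"
        using aux2[OF ne, of a b] by simp
      then show ?thesis unfolding T_mn_def u_def v_def by (simp add: mult.assoc)
    qed
    ultimately show ?thesis by metis
  qed
  define M where "M = (\<lambda>k. real n * \<bar>x\<bar> * (\<bar>a\<bar> + \<bar>b\<bar>) * (real (Suc k * Suc (Suc k)) * r ^ k))"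
  have Msum: "summable M" unfolding M_def
    using sums2[of r] r0 r1 by (intro summable_mult) (auto simp: sums_iff)
  have fbound: "norm (f k t) \<le> M k" if t: "t \<in> {0..1}" for k t
  proof -
    have "\<bar>real (Suc k) * (a*real(Suc k)+b)\<bar> \<le> real (Suc k * Suc (Suc k)) * (\<bar>a\<bar> + \<bar>b\<bar>)"
    proof -
      have "\<bar>a*real(Suc k)+b\<bar> \<le> \<bar>a\<bar> * real (Suc k) + \<bar>b\<bar>" by (simp add: abs_mult order_trans[OF abs_triangle_ineq])
      also have "\<dots> \<le> real (Suc (Suc k)) * (\<bar>a\<bar> + \<bar>b\<bar>)" by (simp add: algebra_simps)
      finally have h: "\<bar>a*real(Suc k)+b\<bar> \<le> real (Suc (Suc k)) * (\<bar>a\<bar> + \<bar>b\<bar>)" .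
      have "\<bar>real (Suc k) * (a*real(Suc k)+b)\<bar> = real (Suc k) * \<bar>a*real(Suc k)+b\<bar>" by (simp add: abs_mult)
      also have "\<dots> \<le> real (Suc k) * (real (Suc (Suc k)) * (\<bar>a\<bar> + \<bar>b\<bar>))" by (rule mult_left_mono[OF h]) simp
      also have "\<dots> = real (Suc k * Suc (Suc k)) * (\<bar>a\<bar> + \<bar>b\<bar>)" by (simp only: of_nat_mult mult.assoc)
      finally show ?thesis .
    qed
    moreover have "\<bar>u t ^ k\<bar> \<le> r ^ k" using ubound[OF t] by (simp add: power_abs power_mono)
    moreover note vbound[OF t]
    ultimately have le: "real n * \<bar>v t\<bar> * \<bar>real (Suc k) * (a*real(Suc k)+b)\<bar> * \<bar>u t ^ k\<bar>
        \<le> real n * \<bar>x\<bar> * (real (Suc k * Suc (Suc k)) * (\<bar>a\<bar> + \<bar>b\<bar>)) * r ^ k"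
      by (intro mult_mono) auto
    have "norm (f k t) = real n * \<bar>v t\<bar> * \<bar>real (Suc k) * (a*real(Suc k)+b)\<bar> * \<bar>u t ^ k\<bar>"
      unfolding f_def by (simp only: real_norm_def abs_mult abs_of_nat)
    also note le
    also have "real n * \<bar>x\<bar> * (real (Suc k * Suc (Suc k)) * (\<bar>a\<bar> + \<bar>b\<bar>)) * r ^ k = M k"
      unfolding M_def by (simp only: ac_simps)
    finally show ?thesis .
  qed
  have ul: "uniform_limit {0..1} (\<lambda>N t. \<Sum>k<N. f k t) (\<lambda>t. suminf (\<lambda>k. f k t)) sequentially"
    by (rule Weierstrass_m_test_ev[OF always_eventually Msum]) (use fbound in auto)
  have cont: "continuous_on {0..1} (\<lambda>t. \<Sum>k<N. f k t)" for N
    unfolding f_def u_def v_def by (intro continuous_intros)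
  obtain I J where I: "\<And>N. ((\<lambda>t. \<Sum>k<N. f k t) has_integral I N) {0..1}"
    and J: "((\<lambda>t. suminf (\<lambda>k. f k t)) has_integral J) {0..1}" and IJ: "I \<longlonglongrightarrow> J"
    using uniform_limit_integral[OF ul cont] by auto
  have IN: "I N = (\<Sum>k<N. c k)" for N
    using has_integral_unique[OF I[of N] has_integral_sum[OF _ fint]] by simp
  have J': "((\<lambda>t. real n * T_mn m n a b x t) has_integral J) {0..1}"
    by (rule has_integral_spike_finite[OF finite.emptyI _ J]) (metis Diff_empty fsum sums_unique)
  have "J = real n * integral {0..1} (T_mn m n a b x)"
    using integral_unique[OF J'] by simp
  moreover have "c sums J" unfolding sums_def using IJ IN by (metis ext)
  ultimately show ?thesis unfolding c_def by simp
qed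

end
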